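(* Let $\mathbb K\in\{\mathbb R,\mathbb C\}$ and let $(g(x))_{x\ge0}$ be a semigroup of invertible linear maps on $\mathbb K^d$. For each $x\ge0$ let $g(x)=D(x)T(x)$ be the multiplicative Jordan–Chevalley decomposition of $g(x)$. Then $(D(x))_{x\ge0}$ and $(T(x))_{x\ge0}$ are each semigroups, and $T(x)D(y)=D(y)T(x)$ for all $x,y\ge0$.
   Context: A semigroup is a map $g:[0,\infty)\to L(\mathbb K^d)$ with $g(0)=\mathrm{id}$ and $g(x+y)=g(x)g(y)$ for all $x,y\ge0$. The multiplicative Jordan–Chevalley decomposition of an invertible linear map $A$ on $\mathbb K^d$ is the unique factorization $A=DT$ with $D$ diagonalizable (over $\mathbb C$), $T$ unipotent (i.e. $T-\mathrm{id}$ nilpotent), and $DT=TD$. *)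

theory Defs
  imports "HOL-Analysis.Analysis"
begin

text \<open>Linear maps on K^d are represented by d x d matrices (type 'a^'n^'n,
  d = CARD('n)).\<close>

definition is_semigroup :: "(real \<Rightarrow> 'a::semiring_1^'n^'n) \<Rightarrow> bool" where
  "is_semigroup g \<longleftrightarrow> g 0 = mat 1 \<and>
     (\<forall>x y. 0 \<le> x \<longrightarrow> 0 \<le> y \<longrightarrow> g (x + y) = g x ** g y)"

definition map_mat :: "('a \<Rightarrow> 'b) \<Rightarrow> 'a^'n^'m \<Rightarrow> 'b^'n^'m" where
  "map_mat f A = (\<chi> i j. f (A $ i $ j))"

definition diagonalizable_C :: "complex^'n^'n \<Rightarrow> bool" where
  "diagonalizable_C A \<longleftrightarrow> (\<exists>P L::complex^'n^'n. invertible P \<and>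
     (\<forall>i j. i \<noteq> j \<longrightarrow> L $ i $ j = 0) \<and> A = P ** L ** matrix_inv P)"

definition nilpotent_mat :: "'a::semiring_1^'n^'n \<Rightarrow> bool" where
  "nilpotent_mat N \<longleftrightarrow> (\<exists>k. ((\<lambda>M. M ** N) ^^ k) (mat 1) = (0::'a^'n^'n))"

definition unipotent :: "'a::ring_1^'n^'n \<Rightarrow> bool" where
  "unipotent T \<longleftrightarrow> nilpotent_mat (T - mat 1)"

text \<open>Multiplicative Jordan-Chevalley decomposition A = D T; the map emb embeds the
  scalar field K (R or C) into C, so that diagonalizability is taken over C.\<close>
definition mult_JC_decomp ::
  "('a::field \<Rightarrow> complex) \<Rightarrow> 'a^'n^'n \<Rightarrow> 'a^'n^'n \<Rightarrow> 'a^'n^'n \<Rightarrow> bool" where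
  "mult_JC_decomp emb A D T \<longleftrightarrow> diagonalizable_C (map_mat emb D) \<and> unipotent T \<and>
     D ** T = T ** D \<and> A = D ** T"

end

theory Submission
  imports Defs
begin


type_synonym 'n cm = "complex^'n^'n"

lemma mm_add_r: "((A::'a::semiring_1^'n^'m) + B) ** C = A ** C + B ** C"
  by (vector matrix_matrix_mult_def sum.distrib distrib_right)
lemma mm_diff_r: "((A::'a::ring_1^'n^'m) - B) ** C = A ** C - B ** C"
  by (vector matrix_matrix_mult_def sum_subtractf left_diff_distrib)
lemma mm_diff_l: "(C::'a::ring_1^'n^'m) ** (A - B) = C ** A - C ** B"
  by (vector matrix_matrix_mult_def sum_subtractf right_diff_distrib)
lemma mat_comm: "(mat c::'a::comm_semiring_1^'n^'n) ** A = A ** mat c"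
  by (simp add: matrix_matrix_mult_def mat_def vec_eq_iff if_distrib if_distribR sum.delta sum.delta' mult.commute cong: if_cong)
lemma mat_mv: "(mat c::'a::comm_semiring_1^'n^'n) *v v = c *s v"
  by (simp add: matrix_vector_mult_def mat_def vec_eq_iff if_distrib if_distribR sum.delta sum.delta' cong: if_cong)
lemma mv_smult: "(M::'a::comm_semiring_1^'n^'m) *v (c *s v) = c *s (M *v v)"
  by (simp add: matrix_vector_mult_def vec_eq_iff sum_distrib_left mult_ac)
lemma mv_sum: "finite S \<Longrightarrow> (M::'a::comm_semiring_1^'n^'m) *v (\<Sum>i\<in>S. f i) = (\<Sum>i\<in>S. M *v f i)"
  by (induct S rule: finite_induct) (auto simp: matrix_vector_right_distrib)

definition mpow :: "'a::semiring_1^'n^'n \<Rightarrow> nat \<Rightarrow> 'a^'n^'n" where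
  "mpow N k = ((\<lambda>M. M ** N) ^^ k) (mat 1)"

lemma mpow_0[simp]: "mpow N 0 = mat 1" by (simp add: mpow_def)
lemma mpow_Suc: "mpow N (Suc k) = mpow N k ** N" by (simp add: mpow_def)
lemma nilpotent_mpow: "nilpotent_mat N \<longleftrightarrow> (\<exists>k. mpow N k = 0)"
  by (simp add: nilpotent_mat_def mpow_def)

lemma mpow_commute:
  assumes "C ** M = M ** (C::'a::semiring_1^'n^'n)"
  shows "C ** mpow M k = mpow M k ** C"
proof (induct k)
  case 0 then show ?case by simp
next
  case (Suc k)
  have "C ** mpow M (Suc k) = (C ** mpow M k) ** M" by (simp add: mpow_Suc matrix_mul_assoc)
  also have "\<dots> = mpow M k ** (C ** M)" by (simp add: Suc matrix_mul_assoc)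
  also have "\<dots> = mpow M (Suc k) ** C" by (simp add: assms mpow_Suc matrix_mul_assoc)
  finally show ?case .
qed

lemma mpow_Suc_mv: "mpow M (Suc k) *v v = mpow M k *v (M *v v)"
  by (simp add: mpow_Suc matrix_vector_mul_assoc)

lemma mpow_mult_comm:
  assumes "A ** B = B ** (A::'a::semiring_1^'n^'n)"
  shows "mpow (A ** B) k = mpow A k ** mpow B k"
proof (induct k)
  case 0 then show ?case by simp
next
  case (Suc k)
  have c: "mpow A k ** B = B ** mpow A k" using mpow_commute[of B A k] assms by simp
  have "mpow (A ** B) (Suc k) = mpow A k ** (mpow B k ** A) ** B"
    by (simp add: mpow_Suc Suc matrix_mul_assoc)
  also have "mpow B k ** A = A ** mpow B k" using mpow_commute[of A B k] assms by simp
  finally show ?case by (simp add: mpow_Suc matrix_mul_assoc)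
qed

lemma mpow_add: "mpow (M::'a::semiring_1^'n^'n) (a + b) = mpow M a ** mpow M b"
  by (induct b) (simp_all add: mpow_Suc matrix_mul_assoc)

lemma mpow_zero_ge: "mpow (M::'a::semiring_1^'n^'n) k = 0 \<Longrightarrow> k \<le> m \<Longrightarrow> mpow M m = 0"
  by (metis le_add_diff_inverse mpow_add times0_left)



lemma nil_sum_aux:
  fixes A B :: "'a::comm_ring_1^'n^'n"
  assumes AB: "A ** B = B ** A"
  shows "\<exists>C D. mpow (A + B) (m+n) = mpow A m ** C + mpow B n ** D \<and>
     C ** A = A ** C \<and> C ** B = B ** C \<and> D ** A = A ** D \<and> D ** B = B ** D"
proof (induct m arbitrary: n)
  case 0
  have cA: "A ** (A + B) = (A + B) ** A" by (simp add: matrix_add_ldistrib mm_add_r AB)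
  have cB: "B ** (A + B) = (A + B) ** B" by (simp add: matrix_add_ldistrib mm_add_r AB)
  show ?case
    by (rule exI[of _ "mpow (A+B) n"], rule exI[of _ 0])
       (simp add: mpow_commute[OF cA] mpow_commute[OF cB])
next
  case (Suc m)
  note IHm = Suc.hyps
  show ?case
  proof (induct n)
    case 0
    have cA: "A ** (A + B) = (A + B) ** A" by (simp add: matrix_add_ldistrib mm_add_r AB)
    have cB: "B ** (A + B) = (A + B) ** B" by (simp add: matrix_add_ldistrib mm_add_r AB)
    show ?case
      by (rule exI[of _ 0], rule exI[of _ "mpow (A+B) (Suc m)"])
         (simp add: mpow_commute[OF cA] mpow_commute[OF cB])
  next
    case (Suc n)
    obtain C1 D1 where h1: "mpow (A + B) (m + Suc n) = mpow A m ** C1 + mpow B (Suc n) ** D1"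
      and c1: "C1 ** A = A ** C1" "C1 ** B = B ** C1" "D1 ** A = A ** D1" "D1 ** B = B ** D1"
      using IHm[of "Suc n"] by blast
    obtain C2 D2 where h2: "mpow (A + B) (Suc m + n) = mpow A (Suc m) ** C2 + mpow B n ** D2"
      and c2: "C2 ** A = A ** C2" "C2 ** B = B ** C2" "D2 ** A = A ** D2" "D2 ** B = B ** D2"
      using Suc.hyps by blast
    have "mpow (A + B) (Suc m + Suc n) = mpow (A + B) (m + Suc n) ** A + mpow (A + B) (Suc m + n) ** B"
      by (simp add: mpow_Suc matrix_add_ldistrib)
    also have "\<dots> = (mpow A m ** C1 ** A + mpow B (Suc n) ** D1 ** A)
                   + (mpow A (Suc m) ** C2 ** B + mpow B n ** D2 ** B)"
      unfolding h1 h2 mm_add_r by simp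
    also have "mpow A m ** C1 ** A = mpow A (Suc m) ** C1"
      by (simp add: mpow_Suc c1 flip: matrix_mul_assoc)
    also have "mpow B n ** D2 ** B = mpow B (Suc n) ** D2"
      by (simp add: mpow_Suc c2 flip: matrix_mul_assoc)
    finally have e: "mpow (A + B) (Suc m + Suc n) =
        mpow A (Suc m) ** (C1 + C2 ** B) + mpow B (Suc n) ** (D1 ** A + D2)"
      by (simp add: matrix_add_ldistrib matrix_mul_assoc algebra_simps)
    have k1: "(C1 + C2 ** B) ** A = A ** (C1 + C2 ** B)"
    proof -
      have "C2 ** B ** A = A ** (C2 ** B)"
      proof -
        have "C2 ** B ** A = C2 ** (A ** B)" by (simp add: matrix_mul_assoc AB)
        also have "\<dots> = (A ** C2) ** B" by (simp add: matrix_mul_assoc c2)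
        finally show ?thesis by (simp add: matrix_mul_assoc)
      qed
      then show ?thesis by (simp add: mm_add_r matrix_add_ldistrib c1)
    qed
    have k2: "(C1 + C2 ** B) ** B = B ** (C1 + C2 ** B)"
      by (simp add: mm_add_r matrix_add_ldistrib c1 c2 matrix_mul_assoc)
         (simp add: c2 flip: matrix_mul_assoc)
    have k3: "(D1 ** A + D2) ** A = A ** (D1 ** A + D2)"
      by (simp add: mm_add_r matrix_add_ldistrib c1 c2 matrix_mul_assoc)
         (simp add: c1 flip: matrix_mul_assoc)
    have k4: "(D1 ** A + D2) ** B = B ** (D1 ** A + D2)"
    proof -
      have "D1 ** A ** B = B ** (D1 ** A)"
      proof -
        have "D1 ** A ** B = D1 ** (B ** A)" by (simp add: AB flip: matrix_mul_assoc)
        also have "\<dots> = (B ** D1) ** A" by (simp add: matrix_mul_assoc c1)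
        finally show ?thesis by (simp add: matrix_mul_assoc)
      qed
      then show ?thesis by (simp add: mm_add_r matrix_add_ldistrib c2)
    qed
    show ?case using e k1 k2 k3 k4 by blast
  qed
qed

lemma nil_sum:
  fixes A B :: "'a::comm_ring_1^'n^'n"
  assumes AB: "A ** B = B ** A" and "nilpotent_mat A" "nilpotent_mat B"
  shows "nilpotent_mat (A + B)"
proof -
  obtain a b where "mpow A a = 0" "mpow B b = 0" using assms by (auto simp: nilpotent_mpow)
  moreover obtain C D where "mpow (A + B) (a+b) = mpow A a ** C + mpow B b ** D"
    using nil_sum_aux[OF AB] by blast
  ultimately show ?thesis by (auto simp: nilpotent_mpow)
qed

lemma unipotent_mult:
  fixes A B :: "'a::comm_ring_1^'n^'n"
  assumes AB: "A ** B = B ** A" and "unipotent A" "unipotent B"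
  shows "unipotent (A ** B)"
proof -
  have e: "A ** B - mat 1 = (A - mat 1) ** B + (B - mat 1)"
    by (simp add: mm_diff_r)
  have c1: "(A - mat 1) ** B = B ** (A - mat 1)" by (simp add: mm_diff_r mm_diff_l AB)
  have n1: "nilpotent_mat ((A - mat 1) ** B)"
  proof -
    obtain k where "mpow (A - mat 1) k = 0" using assms by (auto simp: unipotent_def nilpotent_mpow)
    then have "mpow ((A - mat 1) ** B) k = 0" by (simp add: mpow_mult_comm[OF c1])
    then show ?thesis by (auto simp: nilpotent_mpow)
  qed
  have c2: "((A - mat 1) ** B) ** (B - mat 1) = (B - mat 1) ** ((A - mat 1) ** B)"
    by (simp add: mm_diff_r mm_diff_l AB matrix_mul_assoc)
       (simp add: AB flip: matrix_mul_assoc)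
  show ?thesis unfolding unipotent_def e
    by (rule nil_sum[OF c2 n1]) (use assms in \<open>simp add: unipotent_def\<close>)
qed



definition dg :: "('n::finite \<Rightarrow> 'a::zero) \<Rightarrow> 'a^'n^'n" where
  "dg d = (\<chi> i j. if i = j then d i else 0)"

lemma dg_nth[simp]: "dg d $ i $ j = (if i = j then d i else 0)" by (simp add: dg_def)
lemma mat_dg: "mat c = dg (\<lambda>_. c)" by (simp add: mat_def dg_def)

lemma mm_dg: "(M::'a::semiring_1^'n^'m) ** dg d = (\<chi> i j. M$i$j * d j)"
  by (simp add: matrix_matrix_mult_def dg_def vec_eq_iff if_distrib if_distribR sum.delta sum.delta' cong: if_cong)
lemma dg_mm: "dg d ** (M::'a::semiring_1^'m^'n) = (\<chi> i j. d i * M$i$j)"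
  by (simp add: matrix_matrix_mult_def dg_def vec_eq_iff if_distrib if_distribR sum.delta sum.delta' cong: if_cong)
lemma dg_mv: "dg d *v (v::'a::semiring_1^'n) = (\<chi> i. d i * v$i)"
  by (simp add: matrix_vector_mult_def dg_def vec_eq_iff if_distrib if_distribR sum.delta sum.delta' cong: if_cong)

lemma inv_PQ:
  assumes "invertible (P::'a::semiring_1^'n^'n)"
  shows "P ** matrix_inv P = mat 1" "matrix_inv P ** P = mat 1"
  using someI_ex[OF assms[unfolded invertible_def]] by (auto simp: matrix_inv_def)

lemma diag_proj:
  fixes D :: "complex^'n^'n"
  assumes "diagonalizable_C D"
  shows "\<exists>Pr \<Lambda>. finite \<Lambda> \<and> (\<forall>v. (\<Sum>\<nu>\<in>\<Lambda>. Pr \<nu> *v v) = v) \<and>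
     (\<forall>\<nu> v. D *v (Pr \<nu> *v v) = \<nu> *s (Pr \<nu> *v v)) \<and>
     (\<forall>Y. Y ** D = D ** Y \<longrightarrow> (\<forall>\<nu>. Y ** Pr \<nu> = Pr \<nu> ** Y))"
proof -
  obtain P L :: "complex^'n^'n" where P: "invertible P" and L: "\<forall>i j. i \<noteq> j \<longrightarrow> L $ i $ j = 0"
    and DPL: "D = P ** L ** matrix_inv P"
    using assms unfolding diagonalizable_C_def by blast
  define Q where "Q = matrix_inv P"
  have PQ: "P ** Q = mat 1" and QP: "Q ** P = mat 1" using inv_PQ[OF P] by (auto simp: Q_def)
  have XQP: "X ** Q ** P = X" for X :: "complex^'n^'n" by (simp add: QP flip: matrix_mul_assoc)
  have XPQ: "X ** P ** Q = X" for X :: "complex^'n^'n" by (simp add: PQ flip: matrix_mul_assoc)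
  have DPQ: "D = P ** L ** Q" by (simp add: DPL Q_def)
  define d where "d i = L$i$i" for i
  have Ld: "L = dg d" using L by (auto simp: dg_def d_def vec_eq_iff)
  define e where "e \<nu> i = (if d i = \<nu> then 1 else (0::complex))" for \<nu> i
  define Pr where "Pr \<nu> = P ** dg (e \<nu>) ** Q" for \<nu>
  define \<Lambda> where "\<Lambda> = range d"
  have fin: "finite \<Lambda>" by (simp add: \<Lambda>_def)
  have sum1: "(\<Sum>\<nu>\<in>\<Lambda>. Pr \<nu> *v v) = v" for v
  proof -
    have s: "(\<Sum>\<nu>\<in>\<Lambda>. dg (e \<nu>) *v w) = w" for w :: "complex^'n"
    proof -
      have "(\<Sum>\<nu>\<in>\<Lambda>. e \<nu> i * w $ i) = w $ i" for i
      proof -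
        have "(\<Sum>\<nu>\<in>\<Lambda>. e \<nu> i * w $ i) = (\<Sum>\<nu>\<in>\<Lambda>. if d i = \<nu> then w $ i else 0)"
          by (rule sum.cong) (auto simp: e_def)
        also have "\<dots> = w $ i" using fin by (simp add: \<Lambda>_def)
        finally show ?thesis .
      qed
      then show ?thesis by (simp add: vec_eq_iff dg_mv)
    qed
    have "(\<Sum>\<nu>\<in>\<Lambda>. Pr \<nu> *v v) = (\<Sum>\<nu>\<in>\<Lambda>. P *v (dg (e \<nu>) *v (Q *v v)))"
      by (simp add: Pr_def flip: matrix_vector_mul_assoc)
    also have "\<dots> = P *v (\<Sum>\<nu>\<in>\<Lambda>. dg (e \<nu>) *v (Q *v v))" by (simp add: mv_sum[OF fin])
    also have "\<dots> = P *v (Q *v v)" by (simp only: s)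
    also have "\<dots> = v" by (simp add: matrix_vector_mul_assoc PQ)
    finally show ?thesis .
  qed
  have eig: "D *v (Pr \<nu> *v v) = \<nu> *s (Pr \<nu> *v v)" for \<nu> v
  proof -
    have Le: "L ** dg (e \<nu>) = mat \<nu> ** dg (e \<nu>)"
      by (simp add: Ld mat_dg dg_mm vec_eq_iff e_def)
    have "D *v (Pr \<nu> *v v) = (P ** L ** (Q ** P) ** dg (e \<nu>) ** Q) *v v"
      by (simp add: DPL Pr_def Q_def matrix_vector_mul_assoc matrix_mul_assoc)
    also have "\<dots> = (P ** (L ** dg (e \<nu>)) ** Q) *v v" by (simp add: QP matrix_mul_assoc)
    also have "\<dots> = P *v (mat \<nu> *v (dg (e \<nu>) *v (Q *v v)))"
      by (simp add: Le matrix_vector_mul_assoc matrix_mul_assoc)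
    also have "\<dots> = \<nu> *s (P *v (dg (e \<nu>) *v (Q *v v)))"
      by (simp only: mat_mv mv_smult)
    also have "P *v (dg (e \<nu>) *v (Q *v v)) = Pr \<nu> *v v"
      by (simp add: Pr_def flip: matrix_vector_mul_assoc)
    finally show ?thesis .
  qed
  have com: "Y ** Pr \<nu> = Pr \<nu> ** Y" if YD: "Y ** D = D ** Y" for Y \<nu>
  proof -
    define Y' where "Y' = Q ** Y ** P"
    have "Y' ** L = L ** Y'"
    proof -
      have "Y' ** L = Q ** (Y ** D) ** P"
        by (simp add: Y'_def DPQ matrix_mul_assoc XQP)
      also have "\<dots> = Q ** (D ** Y) ** P" by (simp add: YD)
      also have "\<dots> = L ** Y'"
        by (simp add: Y'_def DPQ matrix_mul_assoc QP)
      finally show ?thesis .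
    qed
    then have "\<forall>i j. Y'$i$j * d j = d i * Y'$i$j"
      by (simp add: Ld dg_mm mm_dg vec_eq_iff)
    then have c: "Y' ** dg (e \<nu>) = dg (e \<nu>) ** Y'"
      apply (simp add: dg_mm mm_dg vec_eq_iff e_def)
      by (metis mult.commute mult_cancel_right)
    have YP: "Y ** P = P ** Y'" by (simp add: Y'_def matrix_mul_assoc PQ)
    have PY: "P ** Y' ** Q = Y" by (simp add: Y'_def matrix_mul_assoc PQ)
       (simp add: PQ flip: matrix_mul_assoc)
    have "Y ** Pr \<nu> = P ** (Y' ** dg (e \<nu>)) ** Q"
      by (simp add: Pr_def matrix_mul_assoc YP)
    also have "\<dots> = P ** dg (e \<nu>) ** (Y' ** Q)" by (simp add: c matrix_mul_assoc)
    also have "Y' ** Q = Q ** Y" using PY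
      by (metis QP matrix_mul_assoc matrix_mul_lid)
    finally show ?thesis by (simp add: Pr_def matrix_mul_assoc)
  qed
  show ?thesis using fin sum1 eig com by blast
qed



definition JC :: "complex^'n^'n \<Rightarrow> complex^'n^'n \<Rightarrow> complex^'n^'n \<Rightarrow> bool" where
  "JC A D T \<longleftrightarrow> diagonalizable_C D \<and> unipotent T \<and> D ** T = T ** D \<and> A = D ** T"

lemma pow_on_inv:
  assumes "\<forall>w\<in>S. X *v w = c *s (M *v w)" "\<forall>w\<in>S. M *v w \<in> S" "w \<in> S"
  shows "mpow X k *v w = c^k *s (mpow M k *v (w::'a::comm_semiring_1^'n))"
  using assms(3)
proof (induct k arbitrary: w)
  case 0 then show ?case by simp
next
  case (Suc k)
  have "mpow X (Suc k) *v w = mpow X k *v (c *s (M *v w))"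
    using Suc.prems assms(1) by (simp add: mpow_Suc_mv)
  also have "\<dots> = c *s (c^k *s (mpow M k *v (M *v w)))"
    using Suc.hyps[of "M *v w"] Suc.prems assms(2) by (simp add: mv_smult)
  also have "\<dots> = c^Suc k *s (mpow M (Suc k) *v w)"
    by (simp add: mpow_Suc_mv vector_smult_assoc mult.commute)
  finally show ?case .
qed

lemma mat_mv_diff: "((A::complex^'n^'n) - mat c) *v v = A *v v - c *s v"
  by (simp add: matrix_vector_mult_diff_rdistrib mat_mv)

lemma gen1:
  assumes "JC A D T" "D *v v = \<mu> *s v"
  shows "\<exists>k. mpow (A - mat \<mu>) k *v v = 0"
proof -
  define S where "S = {v. D *v v = \<mu> *s v}"
  have DT: "D ** T = T ** D" and A: "A = D ** T" using assms by (auto simp: JC_def)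
  obtain k where k: "mpow (T - mat 1) k = 0"
    using assms by (auto simp: JC_def unipotent_def nilpotent_mpow)
  have TS: "T *v w \<in> S" if "w \<in> S" for w
  proof -
    have "D *v (T *v w) = T *v (D *v w)" by (simp add: matrix_vector_mul_assoc DT)
    then show ?thesis using that by (simp add: S_def mv_smult)
  qed
  have 1: "\<forall>w\<in>S. (A - mat \<mu>) *v w = \<mu> *s ((T - mat 1) *v w)"
  proof
    fix w assume w: "w \<in> S"
    have "A *v w = T *v (D *v w)" by (simp add: A DT matrix_vector_mul_assoc)
    also have "\<dots> = \<mu> *s (T *v w)" using w by (simp add: S_def mv_smult)
    finally show "(A - mat \<mu>) *v w = \<mu> *s ((T - mat 1) *v w)"
      by (simp add: mat_mv_diff vector_ssub_ldistrib)
  qed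
  have 2: "\<forall>w\<in>S. (T - mat 1) *v w \<in> S"
  proof
    fix w assume w: "w \<in> S"
    then have "T *v w \<in> S" by (rule TS)
    with w show "(T - mat 1) *v w \<in> S"
      by (simp add: S_def mat_mv_diff matrix_vector_mult_diff_distrib vector_ssub_ldistrib)
  qed
  have "mpow (A - mat \<mu>) k *v v = \<mu>^k *s (mpow (T - mat 1) k *v v)"
    by (rule pow_on_inv[OF 1 2]) (use assms in \<open>simp add: S_def\<close>)
  then show ?thesis using k by auto
qed

lemma mpow_1[simp]: "mpow (mat 1::'a::semiring_1^'n^'n) k = mat 1"
  by (induct k) (simp_all add: mpow_Suc)

lemma eig_nil_zero:
  assumes "JC A D T" "D *v u = \<nu> *s u" "A *v u = \<mu> *s u" "\<nu> \<noteq> \<mu>"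
  shows "u = 0"
proof -
  have DT: "D ** T = T ** D" and A: "A = D ** T" using assms by (auto simp: JC_def)
  obtain k where k: "mpow (T - mat 1) k = 0"
    using assms by (auto simp: JC_def unipotent_def nilpotent_mpow)
  have "A *v u = T *v (D *v u)" by (simp add: A DT matrix_vector_mul_assoc)
  then have Tu: "\<nu> *s (T *v u) = \<mu> *s u" using assms(2,3) by (simp add: mv_smult)
  show ?thesis
  proof (cases "\<nu> = 0")
    case True
    then show ?thesis using Tu assms(4) by simp
  next
    case False
    define c where "c = \<mu> / \<nu> - 1"
    have c0: "c \<noteq> 0" using False assms(4) by (auto simp: c_def)
    have "T *v u = (\<mu> / \<nu>) *s u"
    proof -
      have "T *v u = (1/\<nu>) *s (\<nu> *s (T *v u))" using False by (simp add: vector_smult_assoc)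
      also have "\<dots> = (\<mu> / \<nu>) *s u" by (simp add: Tu vector_smult_assoc)
      finally show ?thesis .
    qed
    then have Nu: "(T - mat 1) *v u = c *s u"
      by (simp add: mat_mv_diff c_def vector_sub_rdistrib)
    define S where "S = {w. (T - mat 1) *v w = c *s w}"
    have "mpow (T - mat 1) k *v u = c^k *s (mpow (mat 1) k *v u)"
      by (rule pow_on_inv[of S]) (auto simp: S_def Nu)
    then have "c^k *s u = 0" using k by simp
    then show ?thesis using c0 by simp
  qed
qed

lemma gen2:
  assumes J: "JC A D T" and v: "mpow (A - mat \<mu>) k *v v = 0"
  shows "D *v v = \<mu> *s v"
proof -
  obtain Pr \<Lambda> where fin: "finite \<Lambda>" and sum1: "\<forall>v. (\<Sum>\<nu>\<in>\<Lambda>. Pr \<nu> *v v) = v"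
    and eig: "\<forall>\<nu> v. D *v (Pr \<nu> *v v) = \<nu> *s (Pr \<nu> *v v)"
    and com: "\<forall>Y. Y ** D = D ** Y \<longrightarrow> (\<forall>\<nu>. Y ** Pr \<nu> = Pr \<nu> ** Y)"
    using diag_proj[of D] J by (auto simp: JC_def)
  have DT: "D ** T = T ** D" and A: "A = D ** T" using J by (auto simp: JC_def)
  have AD: "A ** D = D ** A" by (simp add: A DT matrix_mul_assoc)
  define X where "X = A - mat \<mu>"
  have XD: "X ** D = D ** X" by (simp add: X_def mm_diff_r mm_diff_l AD mat_comm)
  have kill: "\<forall>u. D *v u = \<nu> *s u \<longrightarrow> mpow X j *v u = 0 \<longrightarrow> u = 0" if "\<nu> \<noteq> \<mu>" for \<nu> j
  proof (induct j)
    case 0 then show ?case by simp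
  next
    case (Suc j)
    show ?case
    proof (intro allI impI)
      fix u assume u: "D *v u = \<nu> *s u" and z: "mpow X (Suc j) *v u = 0"
      have "D *v (X *v u) = X *v (D *v u)" by (simp add: matrix_vector_mul_assoc XD)
      then have "D *v (X *v u) = \<nu> *s (X *v u)" using u by (simp add: mv_smult)
      moreover have "mpow X j *v (X *v u) = 0" using z by (simp add: mpow_Suc_mv)
      ultimately have "X *v u = 0" using Suc by blast
      then have "A *v u = \<mu> *s u" by (simp add: X_def mat_mv_diff)
      then show "u = 0" using eig_nil_zero[OF J u _ that] by blast
    qed
  qed
  have z: "Pr \<nu> *v v = 0" if "\<nu> \<noteq> \<mu>" for \<nu>
  proof -
    have "Pr \<nu> ** X = X ** Pr \<nu>" using com XD by metis
    then have "mpow X k ** Pr \<nu> = Pr \<nu> ** mpow X k" using mpow_commute by metis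
    then have "mpow X k *v (Pr \<nu> *v v) = 0"
      by (metis matrix_vector_mul_assoc matrix_vector_mult_0_right v X_def)
    then show ?thesis using kill[OF that, of k] eig by blast
  qed
  have "D *v v = (\<Sum>\<nu>\<in>\<Lambda>. D *v (Pr \<nu> *v v))" by (metis sum1 mv_sum[OF fin])
  also have "\<dots> = (\<Sum>\<nu>\<in>\<Lambda>. \<mu> *s (Pr \<nu> *v v))"
    by (rule sum.cong) (use eig z in auto)
  also have "\<dots> = \<mu> *s v" by (simp add: sum_cmul sum1)
  finally show ?thesis .
qed



lemma span_eq:
  fixes D F G :: "complex^'n^'n"
  assumes "diagonalizable_C D" "\<And>\<nu> v. D *v v = \<nu> *s v \<Longrightarrow> F *v v = G *v v"
  shows "F = G"
proof -
  obtain Pr \<Lambda> where fin: "finite \<Lambda>" and sum1: "\<forall>v. (\<Sum>\<nu>\<in>\<Lambda>. Pr \<nu> *v v) = v"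
    and eig: "\<forall>\<nu> v. D *v (Pr \<nu> *v v) = \<nu> *s (Pr \<nu> *v v)"
    using diag_proj[OF assms(1)] by blast
  have "F *v v = G *v v" for v
  proof -
    have "F *v v = (\<Sum>\<nu>\<in>\<Lambda>. F *v (Pr \<nu> *v v))" by (metis sum1 mv_sum[OF fin])
    also have "\<dots> = (\<Sum>\<nu>\<in>\<Lambda>. G *v (Pr \<nu> *v v))"
      by (rule sum.cong) (use eig assms(2) in auto)
    also have "\<dots> = G *v v" by (metis sum1 mv_sum[OF fin])
    finally show ?thesis .
  qed
  then show ?thesis by (simp add: matrix_eq)
qed

lemma cancel_left:
  assumes "invertible (D::'a::semiring_1^'n^'n)" "D ** M = D ** N"
  shows "M = N"
proof -
  have "matrix_inv D ** (D ** M) = matrix_inv D ** (D ** N)" using assms(2) by simp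
  then show ?thesis by (simp add: matrix_mul_assoc inv_PQ[OF assms(1)])
qed

lemma inv_D:
  assumes "JC A D T" "invertible A"
  shows "invertible D"
proof -
  obtain B where "A ** B = mat 1" using assms(2) by (auto simp: invertible_def)
  then have "D ** (T ** B) = mat 1" using assms(1) by (simp add: JC_def matrix_mul_assoc)
  then show ?thesis by (auto simp: invertible_right_inverse)
qed

lemma commute:
  assumes J: "JC A D T" and iA: "invertible A" and XA: "X ** A = A ** X"
  shows "X ** D = D ** X" "X ** T = T ** X"
proof -
  have dD: "diagonalizable_C D" using J by (simp add: JC_def)
  show XD: "X ** D = D ** X"
  proof (rule span_eq[OF dD])
    fix \<nu> v assume v: "D *v v = \<nu> *s v"
    obtain k where k: "mpow (A - mat \<nu>) k *v v = 0" using gen1[OF J v] by blast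
    have "X ** (A - mat \<nu>) = (A - mat \<nu>) ** X" by (simp add: mm_diff_r mm_diff_l XA mat_comm)
    then have "X ** mpow (A - mat \<nu>) k = mpow (A - mat \<nu>) k ** X" by (rule mpow_commute)
    then have "mpow (A - mat \<nu>) k *v (X *v v) = 0"
      by (metis matrix_vector_mul_assoc matrix_vector_mult_0_right k)
    then have "D *v (X *v v) = \<nu> *s (X *v v)" by (rule gen2[OF J])
    then show "(X ** D) *v v = (D ** X) *v v"
      by (simp add: v mv_smult flip: matrix_vector_mul_assoc)
  qed
  have DT: "D ** T = T ** D" and A: "A = D ** T" using J by (auto simp: JC_def)
  have "D ** (X ** T) = D ** (T ** X)"
  proof -
    have "D ** (X ** T) = X ** A" by (simp add: A matrix_mul_assoc XD)
    also have "\<dots> = D ** (T ** X)" using XA by (simp add: A matrix_mul_assoc)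
    finally show ?thesis .
  qed
  then show "X ** T = T ** X" by (rule cancel_left[OF inv_D[OF J iA]])
qed

lemma uniq:
  assumes J1: "JC A D1 T1" and J2: "JC A D2 T2" and iA: "invertible A"
  shows "D1 = D2" "T1 = T2"
proof -
  show e: "D1 = D2"
  proof (rule span_eq)
    show "diagonalizable_C D1" using J1 by (simp add: JC_def)
    fix \<nu> v assume v: "D1 *v v = \<nu> *s v"
    obtain k where "mpow (A - mat \<nu>) k *v v = 0" using gen1[OF J1 v] by blast
    then have "D2 *v v = \<nu> *s v" by (rule gen2[OF J2])
    then show "D1 *v v = D2 *v v" using v by simp
  qed
  have "D1 ** T1 = D1 ** T2" using J1 J2 e by (simp add: JC_def)
  then show "T1 = T2" by (rule cancel_left[OF inv_D[OF J1 iA]])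
qed



lemma matrix_inv_1: "matrix_inv (mat 1 :: 'a::semiring_1^'n^'n) = mat 1"
proof -
  have "invertible (mat 1 :: 'a^'n^'n)" by (auto simp: invertible_def)
  from inv_PQ(1)[OF this] show ?thesis by simp
qed

lemma JC_1: "JC (mat 1) (mat 1) (mat 1 :: complex^'n^'n)"
proof -
  have "diagonalizable_C (mat 1 :: complex^'n^'n)"
    unfolding diagonalizable_C_def
  proof (rule exI[of _ "mat 1"], rule exI[of _ "mat 1"], intro conjI)
    show "invertible (mat 1 :: complex^'n^'n)" by (auto simp: invertible_def)
    show "\<forall>i j. i \<noteq> j \<longrightarrow> (mat 1 :: complex^'n^'n) $ i $ j = 0" by (simp add: mat_def)
    show "(mat 1 :: complex^'n^'n) = mat 1 ** mat 1 ** matrix_inv (mat 1)" by (simp add: matrix_inv_1)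
  qed
  moreover have "unipotent (mat 1 :: complex^'n^'n)"
    unfolding unipotent_def nilpotent_mpow by (rule exI[of _ 1]) (simp add: mpow_Suc)
  ultimately show ?thesis by (simp add: JC_def)
qed

lemma complex_main:
  fixes g D T :: "real \<Rightarrow> complex^'n^'n"
  assumes sg: "is_semigroup g" and iv: "\<forall>x\<ge>0. invertible (g x)"
    and J: "\<forall>x\<ge>0. JC (g x) (D x) (T x)"
  shows "is_semigroup D \<and> is_semigroup T \<and> (\<forall>x y. 0 \<le> x \<longrightarrow> 0 \<le> y \<longrightarrow> T x ** D y = D y ** T x)"
proof -
  have g0: "g 0 = mat 1" and gadd: "\<And>x y. 0 \<le> x \<Longrightarrow> 0 \<le> y \<Longrightarrow> g (x + y) = g x ** g y"
    using sg by (auto simp: is_semigroup_def)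
  have gc: "g x ** g y = g y ** g x" if "0 \<le> x" "0 \<le> y" for x y
    using gadd[OF that] gadd[OF that(2,1)] by (simp add: add.commute)
  have cm: "D x ** D y = D y ** D x \<and> D x ** T y = T y ** D x \<and>
            T x ** D y = D y ** T x \<and> T x ** T y = T y ** T x" if xy: "0 \<le> x" "0 \<le> y" for x y
  proof -
    have Jx: "JC (g x) (D x) (T x)" and Jy: "JC (g y) (D y) (T y)" using J xy by auto
    have ix: "invertible (g x)" and iy: "invertible (g y)" using iv xy by auto
    have a: "g y ** D x = D x ** g y" "g y ** T x = T x ** g y"
      using commute[OF Jx ix gc[OF xy(2,1)]] by auto
    show ?thesis using commute[OF Jy iy a(1)[symmetric]] commute[OF Jy iy a(2)[symmetric]] by blast
  qed
  have J0: "JC (mat 1) (D 0) (T 0)" using J g0 by force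
  have i0: "invertible (mat 1 :: complex^'n^'n)" using iv g0 by force
  have D0: "D 0 = mat 1" and T0: "T 0 = mat 1"
    using uniq[OF J0 JC_1 i0] by auto
  have Dadd: "D (x + y) = D x ** D y" if xy: "0 \<le> x" "0 \<le> y" for x y
  proof -
    have Jx: "JC (g x) (D x) (T x)" and Jy: "JC (g y) (D y) (T y)" and Jxy: "JC (g (x+y)) (D (x+y)) (T (x+y))"
      using J xy by auto
    have c: "D x ** D y = D y ** D x" "D x ** T y = T y ** D x"
            "T x ** D y = D y ** T x" "T x ** T y = T y ** T x" using cm[OF xy] by auto
    have DTx: "D x ** T x = T x ** D x" and DTy: "D y ** T y = T y ** D y"
      using Jx Jy by (auto simp: JC_def)
    have gxy: "g (x + y) = D x ** D y ** (T x ** T y)"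
    proof -
      have "g (x + y) = D x ** (T x ** D y) ** T y"
        proof -
        have "g x = D x ** T x" "g y = D y ** T y" using Jx Jy by (simp_all add: JC_def)
        then show ?thesis by (simp add: gadd[OF xy] matrix_mul_assoc)
      qed
      also have "\<dots> = D x ** D y ** (T x ** T y)" by (subst c(3)) (simp add: matrix_mul_assoc)
      finally show ?thesis .
    qed
    have uni: "unipotent (T x ** T y)"
      using unipotent_mult[OF c(4)] Jx Jy by (auto simp: JC_def)
    obtain k where k: "mpow (T x ** T y - mat 1) k = 0" using uni by (auto simp: unipotent_def nilpotent_mpow)
    have key: "D (x + y) *v w = (\<mu> * \<nu>) *s w"
      if w: "D x *v w = \<mu> *s w" "D y *v w = \<nu> *s w" for w \<mu> \<nu>
    proof -
      define S where "S = {w. D x *v w = \<mu> *s w \<and> D y *v w = \<nu> *s w}"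
      have pres: "M *v u \<in> S" if "u \<in> S" "M ** D x = D x ** M" "M ** D y = D y ** M" for M u
      proof -
        have "D x *v (M *v u) = M *v (D x *v u)" "D y *v (M *v u) = M *v (D y *v u)"
          by (simp_all add: matrix_vector_mul_assoc that(2,3))
        then show ?thesis using that(1) by (simp add: S_def mv_smult)
      qed
      have TT: "(T x ** T y) *v u \<in> S" if "u \<in> S" for u
      proof -
        have "T y *v u \<in> S" using pres[OF that c(2)[symmetric] DTy[symmetric]] .
        then have "T x *v (T y *v u) \<in> S" using pres[OF _ DTx[symmetric] c(3)] by blast
        then show ?thesis by (simp add: matrix_vector_mul_assoc)
      qed
      have 1: "\<forall>u\<in>S. (g (x+y) - mat (\<mu>*\<nu>)) *v u = (\<mu>*\<nu>) *s ((T x ** T y - mat 1) *v u)"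
      proof
        fix u assume u: "u \<in> S"
        have "g (x+y) *v u = D x *v (D y *v ((T x ** T y) *v u))"
          by (simp add: gxy matrix_vector_mul_assoc matrix_mul_assoc)
        also have "\<dots> = (\<mu>*\<nu>) *s ((T x ** T y) *v u)"
          using TT[OF u] by (simp add: S_def mv_smult vector_smult_assoc mult.commute)
        finally show "(g (x+y) - mat (\<mu>*\<nu>)) *v u = (\<mu>*\<nu>) *s ((T x ** T y - mat 1) *v u)"
          by (simp add: mat_mv_diff vector_ssub_ldistrib)
      qed
      have 2: "\<forall>u\<in>S. (T x ** T y - mat 1) *v u \<in> S"
      proof
        fix u assume u: "u \<in> S"
        then show "(T x ** T y - mat 1) *v u \<in> S" using TT[OF u]
          by (simp add: S_def mat_mv_diff matrix_vector_mult_diff_distrib vector_ssub_ldistrib)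
      qed
      have "mpow (g (x+y) - mat (\<mu>*\<nu>)) k *v w = (\<mu>*\<nu>)^k *s (mpow (T x ** T y - mat 1) k *v w)"
        by (rule pow_on_inv[OF 1 2]) (use w in \<open>simp add: S_def\<close>)
      then have "mpow (g (x+y) - mat (\<mu>*\<nu>)) k *v w = 0" using k by simp
      then show ?thesis by (rule gen2[OF Jxy])
    qed
    show ?thesis
    proof (rule span_eq)
      show "diagonalizable_C (D x)" using Jx by (simp add: JC_def)
      fix \<mu> v assume v: "D x *v v = \<mu> *s v"
      obtain Pr \<Lambda> where fin: "finite \<Lambda>" and sum1: "\<forall>v. (\<Sum>\<nu>\<in>\<Lambda>. Pr \<nu> *v v) = v"
        and eig: "\<forall>\<nu> v. D y *v (Pr \<nu> *v v) = \<nu> *s (Pr \<nu> *v v)"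
        and com: "\<forall>Y. Y ** D y = D y ** Y \<longrightarrow> (\<forall>\<nu>. Y ** Pr \<nu> = Pr \<nu> ** Y)"
        using diag_proj[of "D y"] Jy by (auto simp: JC_def)
      have ex: "D x *v (Pr \<nu> *v v) = \<mu> *s (Pr \<nu> *v v)" for \<nu>
      proof -
        have "D x ** Pr \<nu> = Pr \<nu> ** D x" using com[rule_format, OF c(1)] .
        then have "D x *v (Pr \<nu> *v v) = Pr \<nu> *v (D x *v v)" by (simp add: matrix_vector_mul_assoc)
        then show ?thesis by (simp add: v mv_smult)
      qed
      have "D (x+y) *v v = (\<Sum>\<nu>\<in>\<Lambda>. D (x+y) *v (Pr \<nu> *v v))" by (metis sum1 mv_sum[OF fin])
      also have "\<dots> = (\<Sum>\<nu>\<in>\<Lambda>. (D x ** D y) *v (Pr \<nu> *v v))"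
      proof (rule sum.cong)
        fix \<nu> assume "\<nu> \<in> \<Lambda>"
        have "D (x+y) *v (Pr \<nu> *v v) = (\<mu> * \<nu>) *s (Pr \<nu> *v v)" using key[OF ex[of \<nu>] eig[rule_format]] .
        moreover have "(D x ** D y) *v (Pr \<nu> *v v) = (\<mu> * \<nu>) *s (Pr \<nu> *v v)"
          by (simp add: eig ex mv_smult vector_smult_assoc mult.commute flip: matrix_vector_mul_assoc)
        ultimately show "D (x+y) *v (Pr \<nu> *v v) = (D x ** D y) *v (Pr \<nu> *v v)" by simp
      qed simp
      also have "\<dots> = (D x ** D y) *v v" by (metis sum1 mv_sum[OF fin])
      finally show "D (x+y) *v v = (D x ** D y) *v v" .
    qed
  qed
  have Tadd: "T (x + y) = T x ** T y" if xy: "0 \<le> x" "0 \<le> y" for x y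
  proof -
    have Jx: "JC (g x) (D x) (T x)" and Jy: "JC (g y) (D y) (T y)" and Jxy: "JC (g (x+y)) (D (x+y)) (T (x+y))"
      using J xy by auto
    have ixy: "invertible (g (x+y))" using iv xy by auto
    have c: "T x ** D y = D y ** T x" using cm[OF xy] by auto
    have "D (x+y) ** T (x+y) = g (x + y)" using Jxy by (simp add: JC_def)
    also have "\<dots> = D x ** (T x ** D y) ** T y"
      proof -
        have "g x = D x ** T x" "g y = D y ** T y" using Jx Jy by (simp_all add: JC_def)
        then show ?thesis by (simp add: gadd[OF xy] matrix_mul_assoc)
      qed
    also have "\<dots> = D (x+y) ** (T x ** T y)" by (subst c) (simp add: Dadd[OF xy] matrix_mul_assoc)
    finally show ?thesis by (rule cancel_left[OF inv_D[OF Jxy ixy]])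
  qed
  show ?thesis unfolding is_semigroup_def
  proof (intro conjI allI impI)
    show "D 0 = mat 1" "T 0 = mat 1" by (fact D0, fact T0)
  next
    fix x y :: real assume "0 \<le> x" "0 \<le> y"
    then show "D (x + y) = D x ** D y" "T (x + y) = T x ** T y" "T x ** D y = D y ** T x"
      using Dadd Tadd cm by blast+
  qed
qed



abbreviation cm :: "real^'n^'n \<Rightarrow> complex^'n^'n" where "cm \<equiv> map_mat complex_of_real"

lemma cm_mult: "cm (A ** B) = cm A ** cm B"
  by (simp add: map_mat_def matrix_matrix_mult_def vec_eq_iff)
lemma cm_mat: "cm (mat c) = mat (complex_of_real c)"
  by (simp add: map_mat_def mat_def vec_eq_iff)
lemma cm_diff: "cm (A - B) = cm A - cm B"
  by (simp add: map_mat_def vec_eq_iff)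
lemma cm_0: "cm 0 = 0"
  by (simp add: map_mat_def vec_eq_iff)
lemma cm_inj: "cm A = cm B \<Longrightarrow> A = B"
  by (simp add: map_mat_def vec_eq_iff)
lemma cm_mpow: "cm (mpow N k) = mpow (cm N) k"
  by (induct k) (simp_all add: mpow_Suc cm_mult cm_mat)
lemma cm_inv: "invertible A \<Longrightarrow> invertible (cm A)"
  unfolding invertible_def by (metis cm_mult cm_mat of_real_1)
lemma map_id: "map_mat (\<lambda>z. z) D = D"
  by (simp add: map_mat_def vec_eq_iff)

lemma cm_JC:
  assumes "mult_JC_decomp complex_of_real A D T"
  shows "JC (cm A) (cm D) (cm T)"
proof -
  have u: "unipotent T" using assms by (simp add: mult_JC_decomp_def)
  then obtain k where "mpow (T - mat 1) k = 0" by (auto simp: unipotent_def nilpotent_mpow)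
  then have "mpow (cm T - mat 1) k = 0" by (metis cm_mpow cm_diff cm_mat of_real_1 cm_0)
  then have "unipotent (cm T)" by (auto simp: unipotent_def nilpotent_mpow)
  moreover have "cm D ** cm T = cm T ** cm D" using assms
    by (simp add: mult_JC_decomp_def flip: cm_mult)
  ultimately show ?thesis using assms by (simp add: JC_def mult_JC_decomp_def cm_mult)
qed

lemma real_part:
  fixes g D T :: "real \<Rightarrow> real^'n^'n"
  assumes a: "is_semigroup g \<and> (\<forall>x\<ge>0. invertible (g x)) \<and>
            (\<forall>x\<ge>0. mult_JC_decomp complex_of_real (g x) (D x) (T x))"
  shows "is_semigroup D \<and> is_semigroup T \<and>
              (\<forall>x y. 0 \<le> x \<longrightarrow> 0 \<le> y \<longrightarrow> T x ** D y = D y ** T x)"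
proof -
  have s: "is_semigroup (\<lambda>x. cm (g x))"
    using a by (simp add: is_semigroup_def cm_mult cm_mat)
  have i: "\<forall>x\<ge>0. invertible (cm (g x))" using a cm_inv by blast
  have j: "\<forall>x\<ge>0. JC (cm (g x)) (cm (D x)) (cm (T x))" using a cm_JC by blast
  have r: "is_semigroup (\<lambda>x. cm (D x)) \<and> is_semigroup (\<lambda>x. cm (T x)) \<and>
      (\<forall>x y. 0 \<le> x \<longrightarrow> 0 \<le> y \<longrightarrow> cm (T x) ** cm (D y) = cm (D y) ** cm (T x))"
    by (rule complex_main[OF s i j])
  show ?thesis
    using r unfolding is_semigroup_def
    by (metis cm_inj cm_mult cm_mat of_real_1)
qed

lemma complex_part:
  fixes g D T :: "real \<Rightarrow> complex^'n^'n"
  assumes a: "is_semigroup g \<and> (\<forall>x\<ge>0. invertible (g x)) \<and>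
            (\<forall>x\<ge>0. mult_JC_decomp (\<lambda>z. z) (g x) (D x) (T x))"
  shows "is_semigroup D \<and> is_semigroup T \<and>
              (\<forall>x y. 0 \<le> x \<longrightarrow> 0 \<le> y \<longrightarrow> T x ** D y = D y ** T x)"
proof -
  have "\<forall>x\<ge>0. JC (g x) (D x) (T x)" using a by (simp add: JC_def mult_JC_decomp_def map_id)
  then show ?thesis using complex_main a by blast
qed

theorem mainTheorem7:
  shows "(\<forall>(g::real \<Rightarrow> real^'n^'n) D T.
            is_semigroup g \<and> (\<forall>x\<ge>0. invertible (g x)) \<and>
            (\<forall>x\<ge>0. mult_JC_decomp complex_of_real (g x) (D x) (T x))
          \<longrightarrow> is_semigroup D \<and> is_semigroup T \<and>
              (\<forall>x y. 0 \<le> x \<longrightarrow> 0 \<le> y \<longrightarrow> T x ** D y = D y ** T x))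
       \<and> (\<forall>(g::real \<Rightarrow> complex^'n^'n) D T.
            is_semigroup g \<and> (\<forall>x\<ge>0. invertible (g x)) \<and>
            (\<forall>x\<ge>0. mult_JC_decomp (\<lambda>z. z) (g x) (D x) (T x))
          \<longrightarrow> is_semigroup D \<and> is_semigroup T \<and>
              (\<forall>x y. 0 \<le> x \<longrightarrow> 0 \<le> y \<longrightarrow> T x ** D y = D y ** T x))"
  using real_part complex_part by blast


end
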